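(* For all positive integers $k,n$ it holds that $u(n,n+k)\ge \varepsilon(n,n+k)-2^{k-1}-1$.
   Context: All matrices are binary. For a nonempty set $S$ of columns of a binary matrix, let $z$ be the sum over the integers of the columns in $S$. $S$ is called $1$-free if no entry of $z$ equals $1$, and even if all entries of $z$ are even. For a binary $m\times n$ matrix $A$ with $m<n$: $\varepsilon(A)$ is the smallest cardinality of a nonempty even set of columns, and $u(A)$ is the smallest cardinality of a nonempty $1$-free set of columns. For $m<n$, $\varepsilon(m,n)$ and $u(m,n)$ denote the maxima of $\varepsilon(A)$, resp. $u(A)$, over all binary $m\times n$ matrices $A$. *)

theory Defs
  imports Main
begin

text \<open>A binary m x n matrix is represented as A :: nat \<Rightarrow> nat \<Rightarrow> bool,
  where A i j (for i < m, j < n) is the entry in row i, column j (True = 1).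
  Entries outside the index range are irrelevant.\<close>

definition colsum :: "(nat \<Rightarrow> nat \<Rightarrow> bool) \<Rightarrow> nat set \<Rightarrow> nat \<Rightarrow> nat" where
  "colsum A S i = (\<Sum>j\<in>S. if A i j then 1 else 0)"

definition even_set :: "nat \<Rightarrow> nat \<Rightarrow> (nat \<Rightarrow> nat \<Rightarrow> bool) \<Rightarrow> nat set \<Rightarrow> bool" where
  "even_set m n A S \<longleftrightarrow> S \<noteq> {} \<and> S \<subseteq> {..<n} \<and> (\<forall>i<m. even (colsum A S i))"

definition one_free :: "nat \<Rightarrow> nat \<Rightarrow> (nat \<Rightarrow> nat \<Rightarrow> bool) \<Rightarrow> nat set \<Rightarrow> bool" where
  "one_free m n A S \<longleftrightarrow> S \<noteq> {} \<and> S \<subseteq> {..<n} \<and> (\<forall>i<m. colsum A S i \<noteq> 1)"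

definition eps_mat :: "nat \<Rightarrow> nat \<Rightarrow> (nat \<Rightarrow> nat \<Rightarrow> bool) \<Rightarrow> nat" where
  "eps_mat m n A = (LEAST c. \<exists>S. even_set m n A S \<and> card S = c)"

definition u_mat :: "nat \<Rightarrow> nat \<Rightarrow> (nat \<Rightarrow> nat \<Rightarrow> bool) \<Rightarrow> nat" where
  "u_mat m n A = (LEAST c. \<exists>S. one_free m n A S \<and> card S = c)"

text \<open>Maxima over all binary m x n matrices (meaningful for m < n).\<close>

definition eps :: "nat \<Rightarrow> nat \<Rightarrow> nat" where
  "eps m n = Max {eps_mat m n A | A. True}"

definition u :: "nat \<Rightarrow> nat \<Rightarrow> nat" where
  "u m n = Max {u_mat m n A | A. True}"

end

theory Submission
  imports Defs
begin


definition sd :: "nat set \<Rightarrow> nat set \<Rightarrow> nat set" where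
  "sd S T = (S - T) \<union> (T - S)"

definition evK :: "nat \<Rightarrow> nat \<Rightarrow> (nat \<Rightarrow> nat \<Rightarrow> bool) \<Rightarrow> nat set set" where
  "evK m N A = {S. S \<subseteq> {..<N} \<and> (\<forall>i<m. even (colsum A S i))}"

lemma colsum_card: "finite S \<Longrightarrow> colsum A S i = card {j\<in>S. A i j}"
  unfolding colsum_def by (simp add: sum.If_cases Int_def conj_commute)

lemma card_sd: "finite X \<Longrightarrow> finite Y \<Longrightarrow> card (sd X Y) + 2 * card (X \<inter> Y) = card X + card Y"
proof -
  assume f: "finite X" "finite Y"
  have "card (sd X Y) = card (X - Y) + card (Y - X)"
    unfolding sd_def using f by (intro card_Un_disjoint) auto
  moreover have "card X = card (X - Y) + card (X \<inter> Y)"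
    using card_Int_Diff[OF f(1), of Y] by simp
  moreover have "card Y = card (Y - X) + card (X \<inter> Y)"
    using card_Int_Diff[OF f(2), of X] by (simp add: Int_commute)
  ultimately show ?thesis by simp
qed

lemma sd_filter: "{j\<in>sd S T. P j} = sd {j\<in>S. P j} {j\<in>T. P j}"
  unfolding sd_def by auto

lemma even_sd:
  assumes "finite S" "finite T"
  shows "even (colsum A (sd S T) i) \<longleftrightarrow> (even (colsum A S i) \<longleftrightarrow> even (colsum A T i))"
proof -
  have fs: "finite (sd S T)" using assms unfolding sd_def by auto
  have "card (sd {j\<in>S. A i j} {j\<in>T. A i j}) + 2 * card ({j\<in>S. A i j} \<inter> {j\<in>T. A i j})
     = card {j\<in>S. A i j} + card {j\<in>T. A i j}"
    using assms by (intro card_sd) auto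
  thus ?thesis using assms fs by (simp add: colsum_card sd_filter) presburger
qed

lemma sd_sd: "sd (sd S T) T = S" unfolding sd_def by auto

lemma inj_sd: "inj_on (\<lambda>S. sd S T) X"
  by (metis inj_onI sd_sd)

lemma sd_sub: "S \<subseteq> {..<N} \<Longrightarrow> T \<subseteq> {..<N} \<Longrightarrow> sd S T \<subseteq> {..<N}"
  unfolding sd_def by auto

lemma finite_evK: "finite (evK m N A)"
  by (rule finite_subset[of _ "Pow {..<N}"]) (auto simp: evK_def)

lemma sd_in_evK: "S \<in> evK m N A \<Longrightarrow> T \<in> evK m N A \<Longrightarrow> sd S T \<in> evK m N A"
proof -
  assume a: "S \<in> evK m N A" "T \<in> evK m N A"
  hence f: "finite S" "finite T" by (auto simp: evK_def intro: finite_subset)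
  show ?thesis using a even_sd[OF f] sd_sub by (auto simp: evK_def)
qed

lemma card_evK: "2 ^ N \<le> 2 ^ m * card (evK m N A)"
proof -
  define F where "F p = {S\<in>Pow {..<N}. {i. i<m \<and> odd (colsum A S i)} = p}" for p
  have "Pow {..<N} = (\<Union>p\<in>Pow {..<m}. F p)" unfolding F_def by auto
  hence "card (Pow {..<N}) \<le> (\<Sum>p\<in>Pow {..<m}. card (F p))"
    by (metis card_UN_le finite_Pow_iff finite_lessThan)
  also have "\<dots> \<le> (\<Sum>p\<in>Pow {..<m}. card (evK m N A))"
  proof (rule sum_mono)
    fix p assume "p \<in> Pow {..<m}"
    show "card (F p) \<le> card (evK m N A)"
    proof (cases "F p = {}")
      case True then show ?thesis by simp
    next
      case False
      then obtain S0 where S0: "S0 \<in> F p" by auto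
      have "(\<lambda>S. sd S S0) ` F p \<subseteq> evK m N A"
      proof
        fix X assume "X \<in> (\<lambda>S. sd S S0) ` F p"
        then obtain S where S: "S \<in> F p" "X = sd S S0" by auto
        have f: "finite S" "finite S0" using S S0 unfolding F_def by (auto intro: finite_subset)
        have "\<forall>i<m. even (colsum A S i) \<longleftrightarrow> even (colsum A S0 i)"
        proof (intro allI impI)
          fix i assume "i < m"
          have "i \<in> {i. i<m \<and> odd (colsum A S i)} \<longleftrightarrow> i \<in> {i. i<m \<and> odd (colsum A S0 i)}"
            using S(1) S0 unfolding F_def by auto
          thus "even (colsum A S i) \<longleftrightarrow> even (colsum A S0 i)" using \<open>i<m\<close> by auto
        qed
        thus "X \<in> evK m N A" using S S0 even_sd[OF f] sd_sub unfolding F_def evK_def by auto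
      qed
      thus ?thesis by (rule card_inj_on_le[OF inj_sd _ finite_evK])
    qed
  qed
  finally show ?thesis by (simp add: card_Pow mult.commute)
qed



lemma empty_evK: "{} \<in> evK m N A" by (simp add: evK_def colsum_def)

lemma card_evK_ge: assumes "N = m + k" shows "2 ^ k \<le> card (evK m N A)"
proof -
  have "2 ^ m * 2 ^ k \<le> 2 ^ m * card (evK m N A)"
    using card_evK[of N m A] assms by (simp add: power_add)
  thus ?thesis by simp
qed

lemma even_exists: assumes "m < N" shows "\<exists>S. even_set m N A S"
proof -
  define k where "k = N - m"
  have k: "N = m + k" "k \<ge> 1" using assms unfolding k_def by auto
  have "(2::nat) ^ 1 \<le> 2 ^ k" by (rule power_increasing) (use k in auto)
  hence "2 \<le> card (evK m N A)" using card_evK_ge[OF k(1), of A] by simp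
  then obtain S where "S \<in> evK m N A" "S \<noteq> {}"
  proof -
    have "\<not> evK m N A \<subseteq> {{}}"
    proof
      assume "evK m N A \<subseteq> {{}}"
      hence "card (evK m N A) \<le> card {{}::nat set}" by (rule card_mono[rotated]) simp
      with \<open>2 \<le> card (evK m N A)\<close> show False by simp
    qed
    thus ?thesis using that by auto
  qed
  thus ?thesis unfolding evK_def even_set_def by auto
qed

lemma eps_mat_props:
  assumes "m < N"
  shows "\<exists>S. even_set m N A S \<and> card S = eps_mat m N A"
    and "even_set m N A S \<Longrightarrow> eps_mat m N A \<le> card S"
proof -
  obtain S0 where "even_set m N A S0" using even_exists[OF assms] by auto
  hence "\<exists>c. \<exists>S. even_set m N A S \<and> card S = c" by blast
  from LeastI_ex[OF this] show "\<exists>S. even_set m N A S \<and> card S = eps_mat m N A"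
    unfolding eps_mat_def .
  show "even_set m N A S \<Longrightarrow> eps_mat m N A \<le> card S"
    unfolding eps_mat_def by (rule Least_le) auto
qed

lemma u_mat_props:
  assumes "m < N"
  shows "\<exists>S. one_free m N A S \<and> card S = u_mat m N A"
proof -
  obtain S0 where "even_set m N A S0" using even_exists[OF assms] by auto
  hence "one_free m N A S0" unfolding even_set_def one_free_def
  proof (intro conjI allI impI)
    fix i assume "S0 \<noteq> {} \<and> S0 \<subseteq> {..<N} \<and> (\<forall>i<m. even (colsum A S0 i))" "i < m"
    hence "even (colsum A S0 i)" by blast
    thus "colsum A S0 i \<noteq> 1" by (metis odd_one)
  qed blast+
  hence "\<exists>c. \<exists>S. one_free m N A S \<and> card S = c" by blast
  from LeastI_ex[OF this] show "\<exists>S. one_free m N A S \<and> card S = u_mat m N A"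
    unfolding u_mat_def .
qed

lemma card_as_sum: "S \<subseteq> {..<N::nat} \<Longrightarrow> card S = (\<Sum>j<N. if j \<in> S then 1 else 0)"
proof -
  assume "S \<subseteq> {..<N}"
  hence e: "{..<N} \<inter> S = S" by auto
  have "(\<Sum>j<N. if j \<in> S then 1 else 0) = sum (\<lambda>_. 1::nat) ({..<N} \<inter> S)"
    using sum.inter_restrict[of "{..<N}" "\<lambda>_. 1::nat" S] by simp
  also have "\<dots> = card ({..<N} \<inter> S)" by (rule card_eq_sum[symmetric])
  finally have "(\<Sum>j<N. if j \<in> S then 1 else 0) = card ({..<N} \<inter> S)" .
  thus ?thesis using e by simp
qed

lemma half_bound: "2 * card {S\<in>evK m N A. j \<in> S} \<le> card (evK m N A)"
proof (cases "\<exists>S0\<in>evK m N A. j \<in> S0")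
  case False
  hence "{S\<in>evK m N A. j \<in> S} = {}" by auto
  then show ?thesis by (simp only: card.empty)
next
  case True
  then obtain S0 where S0: "S0 \<in> evK m N A" "j \<in> S0" by auto
  let ?K = "evK m N A"
  have "(\<lambda>S. sd S S0) ` {S\<in>?K. j \<in> S} \<subseteq> {S\<in>?K. j \<notin> S}"
  proof
    fix X assume "X \<in> (\<lambda>S. sd S S0) ` {S\<in>?K. j \<in> S}"
    then obtain S where S: "S \<in> ?K" "j \<in> S" "X = sd S S0" by blast
    have "X \<in> ?K" using S(1,3) S0(1) sd_in_evK by blast
    moreover have "j \<notin> X" using S(2,3) S0(2) unfolding sd_def by blast
    ultimately show "X \<in> {S\<in>?K. j \<notin> S}" by blast
  qed
  hence c: "card {S\<in>?K. j \<in> S} \<le> card {S\<in>?K. j \<notin> S}"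
    by (rule card_inj_on_le[OF inj_sd]) (simp add: finite_evK)
  have "card ?K = card {S\<in>?K. j \<in> S} + card {S\<in>?K. j \<notin> S}"
  proof -
    have "?K = {S\<in>?K. j \<in> S} \<union> {S\<in>?K. j \<notin> S}" by auto
    hence "card ?K = card ({S\<in>?K. j \<in> S} \<union> {S\<in>?K. j \<notin> S})" by simp
    also have "\<dots> = card {S\<in>?K. j \<in> S} + card {S\<in>?K. j \<notin> S}"
      by (rule card_Un_disjoint) (auto simp: finite_evK)
    finally show ?thesis .
  qed
  then show ?thesis using c by simp
qed

lemma sum_card_evK: "(\<Sum>S\<in>evK m N A. card S) = (\<Sum>j<N. card {S\<in>evK m N A. j \<in> S})"
proof -
  have "(\<Sum>S\<in>evK m N A. card S) = (\<Sum>S\<in>evK m N A. \<Sum>j<N. if j \<in> S then 1 else 0)"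
    by (rule sum.cong[OF refl], rule card_as_sum) (auto simp: evK_def)
  also have "\<dots> = (\<Sum>j<N. \<Sum>S\<in>evK m N A. if j \<in> S then 1 else 0)" by (rule sum.swap)
  also have "\<dots> = (\<Sum>j<N. card {S\<in>evK m N A. j \<in> S})"
  proof (rule sum.cong[OF refl])
    fix j
    have "(\<Sum>S\<in>evK m N A. if j \<in> S then 1 else 0) = sum (\<lambda>_. 1::nat) {S\<in>evK m N A. j \<in> S}"
      using sum.inter_filter[OF finite_evK, where g="\<lambda>_. 1::nat" and P="\<lambda>S. j \<in> S"] by simp
    also have "\<dots> = card {S\<in>evK m N A. j \<in> S}" by (rule card_eq_sum[symmetric])
    finally show "(\<Sum>S\<in>evK m N A. if j \<in> S then 1 else 0) = card {S\<in>evK m N A. j \<in> S}" .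
  qed
  finally show ?thesis .
qed

lemma plotkin:
  assumes "N = m + k" "k \<ge> 1"
  shows "2 * eps_mat m N A * (2 ^ k - 1) \<le> N * 2 ^ k"
proof -
  let ?K = "evK m N A"
  define c where "c = card ?K"
  define d where "d = eps_mat m N A"
  have mN: "m < N" using assms by simp
  have ck: "2 ^ k \<le> c" unfolding c_def by (rule card_evK_ge[OF assms(1)])
  have "(\<Sum>S\<in>?K. card S) = (\<Sum>S\<in>?K - {{}}. card S)"
    by (rule sum.mono_neutral_right) (auto simp: finite_evK)
  also have "\<dots> \<ge> (\<Sum>S\<in>?K - {{}}. d)"
  proof (rule sum_mono)
    fix S assume "S \<in> ?K - {{}}"
    hence "even_set m N A S" unfolding evK_def even_set_def by auto
    thus "d \<le> card S" unfolding d_def by (rule eps_mat_props(2)[OF mN])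
  qed
  moreover have "(\<Sum>S\<in>?K - {{}}. d) = (c - 1) * d"
    by (simp add: c_def empty_evK finite_evK card_Diff_singleton)
  ultimately have "(c - 1) * d \<le> (\<Sum>S\<in>?K. card S)" by (cases "d = 0") auto
  also have "\<dots> = (\<Sum>j<N. card {S\<in>?K. j \<in> S})" by (rule sum_card_evK)
  finally have "2 * ((c - 1) * d) \<le> 2 * (\<Sum>j<N. card {S\<in>?K. j \<in> S})" by simp
  also have "\<dots> = (\<Sum>j<N. 2 * card {S\<in>?K. j \<in> S})" by (simp add: sum_distrib_left)
  also have "\<dots> \<le> (\<Sum>j<N. c)" unfolding c_def by (rule sum_mono) (rule half_bound)
  finally have h: "2 * (c - 1) * d \<le> N * c" by simp
  define P where "P = (2::nat) ^ k"
  have Pc: "P \<le> c" using ck unfolding P_def .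
  have Ppos: "1 \<le> P" unfolding P_def by simp
  have e1: "(P - 1) * c = P * c - c" by (simp add: diff_mult_distrib)
  have e2: "(c - 1) * P = P * c - P"
  proof -
    have "(c - 1) * P = c * P - 1 * P" by (rule diff_mult_distrib)
    thus ?thesis by (simp add: mult.commute)
  qed
  have e3: "(P - 1) * c \<le> (c - 1) * P" unfolding e1 e2 using Pc by linarith
  have "(2 * d * (P - 1)) * c = (2 * d) * ((P - 1) * c)" by (simp add: mult.assoc)
  also have "\<dots> \<le> (2 * d) * ((c - 1) * P)" using e3 by (rule mult_le_mono2)
  also have "\<dots> = P * (2 * (c - 1) * d)" by (simp add: mult.commute mult.left_commute)
  also have "\<dots> \<le> P * (N * c)" using h by (rule mult_le_mono2)
  also have "\<dots> = (N * P) * c" by (simp add: mult.commute mult.left_commute)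
  finally have "(2 * d * (P - 1)) * c \<le> (N * P) * c" .
  moreover have "c > 0" using Pc Ppos by linarith
  ultimately have "2 * d * (P - 1) \<le> N * P" by (meson mult_le_cancel2)
  thus ?thesis unfolding d_def P_def .
qed



definition ind :: "nat set \<Rightarrow> nat \<Rightarrow> nat" where
  "ind V x = (if x \<in> V then 1 else 0)"

definition trip_ok :: "nat \<Rightarrow> nat set \<Rightarrow> bool" where
  "trip_ok k V \<longleftrightarrow> (\<forall>l<k. \<forall>w. 1 \<le> w \<longrightarrow> w < 2^l \<longrightarrow> ind V (2^l) + ind V w + ind V (2^l + w) \<noteq> 1)"

lemma type_lemma:
  "V \<subseteq> {1..<2^k} \<Longrightarrow> V \<noteq> {} \<Longrightarrow> trip_ok k V \<Longrightarrow> 2^k \<le> 2 * card V"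
proof (induction k arbitrary: V)
  case 0
  then show ?case by auto
next
  case (Suc k)
  define h :: nat where "h = 2^k"
  have h1: "1 \<le> h" unfolding h_def by simp
  have Vsub: "V \<subseteq> {1..<2*h}" using Suc.prems(1) unfolding h_def by simp
  have fin: "finite V" using Vsub finite_subset by blast
  have tr: "\<And>w. 1 \<le> w \<Longrightarrow> w < h \<Longrightarrow> ind V h + ind V w + ind V (h + w) \<noteq> 1"
    using Suc.prems(3) unfolding trip_ok_def h_def by auto
  show ?case
  proof (cases "h \<in> V")
    case True
    define f where "f w = (if w \<in> V then w else h + w)" for w
    have inj: "inj_on f {1..<h}"
      by (rule inj_onI) (auto simp: f_def split: if_splits)
    have img: "insert h (f ` {1..<h}) \<subseteq> V"
    proof -
      have "f w \<in> V" if "w \<in> {1..<h}" for w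
      proof (cases "w \<in> V")
        case True then show ?thesis by (simp add: f_def)
      next
        case False
        have "ind V h + ind V w + ind V (h + w) \<noteq> 1" using tr that by auto
        hence "h + w \<in> V" using False \<open>h \<in> V\<close> by (auto simp: ind_def split: if_splits)
        then show ?thesis using False by (simp add: f_def)
      qed
      thus ?thesis using True by auto
    qed
    have "h \<notin> f ` {1..<h}" by (auto simp: f_def)
    hence "card (insert h (f ` {1..<h})) = Suc (h - 1)"
      using card_image[OF inj] by simp
    moreover have "card (insert h (f ` {1..<h})) \<le> card V" by (rule card_mono[OF fin img])
    ultimately have "h \<le> card V" using h1 by simp
    then show ?thesis unfolding h_def by simp
  next
    case False
    define L where "L = V \<inter> {1..<h}"
    have eq: "w \<in> V \<longleftrightarrow> h + w \<in> V" if "1 \<le> w" "w < h" for w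
      using tr[OF that] False by (auto simp: ind_def split: if_splits)
    have "L \<noteq> {}"
    proof
      assume L0: "L = {}"
      obtain x where x: "x \<in> V" using Suc.prems(2) by auto
      have "x \<noteq> h" using x False by auto
      moreover have "\<not> (x < h)"
      proof
        assume "x < h"
        moreover have "1 \<le> x" using x Vsub by auto
        ultimately have "x \<in> L" using x unfolding L_def by simp
        thus False using L0 by simp
      qed
      ultimately have "h < x" by simp
      hence "x - h \<in> V" using eq[of "x - h"] x Vsub by auto
      moreover have "x - h \<in> {1..<h}" using \<open>h < x\<close> x Vsub by auto
      ultimately show False using L0 unfolding L_def by auto
    qed
    moreover have "L \<subseteq> {1..<2^k}" unfolding L_def h_def by auto
    moreover have "trip_ok k L"
      unfolding trip_ok_def
    proof (intro allI impI)
      fix l w :: nat assume l: "l < k" and w: "1 \<le> w" "w < 2^l"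
      have "2^l + w < 2^(Suc l)" using w by simp
      also have "(2::nat)^(Suc l) \<le> 2^k" using l by (intro power_increasing) auto
      finally have lt: "2^l + w < h" unfolding h_def .
      have "(2::nat)^l < h" using lt by simp
      hence "ind L (2^l) = ind V (2^l)" "ind L w = ind V w" "ind L (2^l + w) = ind V (2^l + w)"
        using lt w unfolding ind_def L_def by auto
      moreover have "ind V (2^l) + ind V w + ind V (2^l + w) \<noteq> 1"
        using Suc.prems(3) l w unfolding trip_ok_def by auto
      ultimately show "ind L (2^l) + ind L w + ind L (2^l + w) \<noteq> 1" by simp
    qed
    ultimately have IH: "2^k \<le> 2 * card L" using Suc.IH by blast
    have sub: "L \<union> (\<lambda>x. h + x) ` L \<subseteq> V"
      using eq unfolding L_def by auto
    have disj: "L \<inter> (\<lambda>x. h + x) ` L = {}" unfolding L_def by auto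
    have "card (L \<union> (\<lambda>x. h + x) ` L) = card L + card ((\<lambda>x. h + x) ` L)"
      by (rule card_Un_disjoint) (auto simp: L_def disj)
    also have "card ((\<lambda>x. h + x) ` L) = card L" by (rule card_image) (simp add: inj_on_def)
    finally have "2 * card L \<le> card V" using card_mono[OF fin sub] by simp
    then show ?thesis using IH unfolding h_def by simp
  qed
qed



definition Rset :: "nat \<Rightarrow> nat \<Rightarrow> nat set set" where
  "Rset N k = (\<lambda>j. {j, j + (2^k - 1)}) ` {..<N - (2^k - 1)}
     \<union> (\<lambda>(l, w). {2^l - 1, w - 1, 2^l + w - 1}) ` (SIGMA l:{..<k}. {1..<2^l})"

lemma sum_pow_minus: "(\<Sum>l<k. (2::nat)^l - 1) + k + 1 = 2^k"
proof (induction k)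
  case 0 then show ?case by simp
next
  case (Suc k)
  have "(1::nat) \<le> 2^k" by simp
  then show ?case using Suc by simp
qed

lemma finite_Rset: "finite (Rset N k)"
  unfolding Rset_def by auto

lemma card_Rset:
  assumes "2^k - 1 \<le> N"
  shows "card (Rset N k) \<le> N - k"
proof -
  let ?M = "(2::nat)^k - 1"
  have "card (Rset N k) \<le> card ((\<lambda>j. {j, j + ?M}) ` {..<N - ?M})
      + card ((\<lambda>(l, w). {(2::nat)^l - 1, w - 1, 2^l + w - 1}) ` (SIGMA l:{..<k}. {1..<(2::nat)^l}))"
    unfolding Rset_def by (rule card_Un_le)
  also have "\<dots> \<le> card {..<N - ?M} + card (SIGMA l:{..<k}. {1..<(2::nat)^l})"
    by (intro add_mono card_image_le) auto
  also have "card (SIGMA l:{..<k}. {1..<(2::nat)^l}) = (\<Sum>l<k. 2^l - 1)"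
    by (subst card_SigmaI) auto
  also have "card {..<N - ?M} = N - ?M" by simp
  finally have "card (Rset N k) \<le> N - ?M + (\<Sum>l<k. 2^l - 1)" .
  moreover have "(\<Sum>l<k. (2::nat)^l - 1) + k + 1 = 2^k" by (rule sum_pow_minus)
  ultimately show ?thesis using assms by linarith
qed

lemma card3:
  assumes "a \<noteq> b" "a \<noteq> c" "b \<noteq> c"
  shows "card (S \<inter> {a, b, c}) = ind S a + ind S b + ind S c"
  using assms by (cases "a \<in> S"; cases "b \<in> S"; cases "c \<in> S") (auto simp: ind_def)

lemma col_lemma:
  fixes f :: "nat \<Rightarrow> nat set"
  assumes k1: "k \<ge> 1" and MN: "2^k - 1 \<le> N"
    and fR: "\<forall>r\<in>Rset N k. \<exists>i<n. f i = r"
    and S: "one_free n N (\<lambda>i j. j \<in> f i) S"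
  shows "2^k * (N div (2^k - 1)) \<le> 2 * card S"
proof -
  define M :: nat where "M = 2^k - 1"
  have "(2::nat)^1 \<le> 2^k" using k1 by (intro power_increasing) auto
  hence M1: "1 \<le> M" unfolding M_def by simp
  have SN: "S \<subseteq> {..<N}" and Sne: "S \<noteq> {}" using S unfolding one_free_def by auto
  have finS: "finite S" using SN finite_subset by blast
  have hR: "card (S \<inter> r) \<noteq> 1" if "r \<in> Rset N k" for r
  proof -
    have "\<exists>i<n. f i = r" using fR that by (rule bspec)
    then obtain i where i: "i < n" "f i = r" by (elim exE conjE)
    have "\<forall>i<n. colsum (\<lambda>i j. j \<in> f i) S i \<noteq> 1" using S unfolding one_free_def by (elim conjE)
    hence c1: "colsum (\<lambda>i j. j \<in> f i) S i \<noteq> 1" using i(1) by (elim allE impE)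
    have c2: "colsum (\<lambda>i j. j \<in> f i) S i = card {j\<in>S. j \<in> f i}" by (rule colsum_card[OF finS])
    have c3: "{j\<in>S. j \<in> f i} = S \<inter> r" using i(2) by blast
    show ?thesis using c1 c2 c3 by simp
  qed
  have pair: "j \<in> S \<longleftrightarrow> j + M \<in> S" if "j + M < N" for j
  proof -
    have jm: "j \<in> {..<N - (2^k - 1)}" using that unfolding M_def by simp
    have "{j, j + M} \<in> Rset N k" unfolding Rset_def M_def
      by (rule UnI1, rule image_eqI[where x=j, OF _ jm]) simp
    hence "card (S \<inter> {j, j + M}) \<noteq> 1" by (rule hR)
    moreover have "j \<noteq> j + M" using M1 by simp
    ultimately show ?thesis by (cases "j \<in> S"; cases "j + M \<in> S") auto
  qed
  have modl: "j \<in> S \<longleftrightarrow> j mod M \<in> S" if "j < N" for j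
    using that
  proof (induction j rule: less_induct)
    case (less j)
    show ?case
    proof (cases "j < M")
      case True then show ?thesis by simp
    next
      case False
      hence j: "j = (j - M) + M" by simp
      have "j - M < j" using False M1 by simp
      hence IH: "j - M \<in> S \<longleftrightarrow> (j - M) mod M \<in> S" using less by simp
      have "j - M \<in> S \<longleftrightarrow> j \<in> S" using pair[of "j - M"] j less.prems by simp
      moreover have "(j - M) mod M = j mod M" using False by (simp add: le_mod_geq)
      ultimately show ?thesis using IH by simp
    qed
  qed
  define V where "V = {v \<in> {1..<2^k}. v - 1 \<in> S}"
  have Vsub: "V \<subseteq> {1..<2^k}" unfolding V_def by auto
  have Vne: "V \<noteq> {}"
  proof -
    obtain x where x: "x \<in> S" using Sne by auto
    hence "x mod M \<in> S" using modl SN by auto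
    moreover have "x mod M < M" using M1 by simp
    ultimately have "x mod M + 1 \<in> V" unfolding V_def M_def by auto
    thus ?thesis by auto
  qed
  have trip: "trip_ok k V"
    unfolding trip_ok_def
  proof (intro allI impI)
    fix l w :: nat assume l: "l < k" and w: "1 \<le> w" "w < 2^l"
    have "2^l + w < 2^(Suc l)" using w by simp
    also have "(2::nat)^(Suc l) \<le> 2^k" using l by (intro power_increasing) auto
    finally have lt: "2^l + w < 2^k" .
    have pl: "(1::nat) \<le> 2^l" by simp
    have "{2^l - 1, w - 1, 2^l + w - 1} \<in> Rset N k"
      unfolding Rset_def
    proof (rule UnI2, rule image_eqI[where x="(l, w)"])
      show "(l, w) \<in> (SIGMA l:{..<k}. {1..<2^l})" using l w by simp
    qed simp
    hence "card (S \<inter> {2^l - 1, w - 1, 2^l + w - 1}) \<noteq> 1" by (rule hR)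
    moreover have "card (S \<inter> {2^l - 1, w - 1, 2^l + w - 1})
        = ind S (2^l - 1) + ind S (w - 1) + ind S (2^l + w - 1)"
      using w by (intro card3) auto
    moreover have "ind V (2^l) = ind S (2^l - 1)" "ind V w = ind S (w - 1)"
      "ind V (2^l + w) = ind S (2^l + w - 1)"
      using lt w pl l unfolding ind_def V_def by auto
    ultimately show "ind V (2^l) + ind V w + ind V (2^l + w) \<noteq> 1" by simp
  qed
  have TV: "2^k \<le> 2 * card V" by (rule type_lemma[OF Vsub Vne trip])
  define q where "q = N div M"
  define g where "g = (\<lambda>(v, i). (v - 1) + i * M)"
  have dm: "(x + i * M) mod M = x" "(x + i * M) div M = i" if "x < M" for x i
    using that M1 by auto
  have inj: "inj_on g (V \<times> {..<q})"
  proof (rule inj_onI)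
    fix p p' assume p: "p \<in> V \<times> {..<q}" "p' \<in> V \<times> {..<q}" "g p = g p'"
    obtain v i where vi: "p = (v, i)" by (cases p)
    obtain v' i' where vi': "p' = (v', i')" by (cases p')
    have v: "1 \<le> v" "v - 1 < M" using p(1) vi unfolding V_def M_def by auto
    have v': "1 \<le> v'" "v' - 1 < M" using p(2) vi' unfolding V_def M_def by auto
    have e: "(v - 1) + i * M = (v' - 1) + i' * M" using p(3) vi vi' unfolding g_def by simp
    have "v - 1 = ((v - 1) + i * M) mod M" by (rule dm(1)[OF v(2), symmetric])
    also have "\<dots> = ((v' - 1) + i' * M) mod M" using e by (rule arg_cong)
    also have "\<dots> = v' - 1" by (rule dm(1)[OF v'(2)])
    finally have "v - 1 = v' - 1" .
    moreover have "i = i'"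
    proof -
      have "i = ((v - 1) + i * M) div M" by (rule dm(2)[OF v(2), symmetric])
      also have "\<dots> = ((v' - 1) + i' * M) div M" using e by (rule arg_cong)
      also have "\<dots> = i'" by (rule dm(2)[OF v'(2)])
      finally show ?thesis .
    qed
    ultimately show "p = p'" using vi vi' v v' by simp
  qed
  have img: "g ` (V \<times> {..<q}) \<subseteq> S"
  proof
    fix y assume "y \<in> g ` (V \<times> {..<q})"
    then obtain v i where vi: "v \<in> V" "i < q" "y = (v - 1) + i * M" unfolding g_def by auto
    have v: "v - 1 < M" "v - 1 \<in> S" using vi(1) unfolding V_def M_def by auto
    have "Suc i * M \<le> q * M" using vi(2) by (intro mult_le_mono1) simp
    also have "q * M \<le> N" unfolding q_def by simp
    finally have yN: "y < N" using vi(3) v(1) by simp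
    have "y mod M = v - 1" using vi(3) dm(1)[OF v(1)] by simp
    thus "y \<in> S" using modl[OF yN] v(2) by simp
  qed
  have "card V * q = card (V \<times> {..<q})" by (simp add: card_cartesian_product)
  also have "\<dots> = card (g ` (V \<times> {..<q}))" by (rule card_image[OF inj, symmetric])
  also have "\<dots> \<le> card S" by (rule card_mono[OF finS img])
  finally have "card V * q \<le> card S" .
  have "2^k * q \<le> (2 * card V) * q" using TV by (rule mult_le_mono1)
  also have "\<dots> = 2 * (card V * q)" by simp
  also have "\<dots> \<le> 2 * card S" using \<open>card V * q \<le> card S\<close> by simp
  finally have "2^k * q \<le> 2 * card S" .
  thus ?thesis unfolding q_def M_def .
qed



lemma u_ge:
  assumes "m < N" shows "u_mat m N A \<le> u m N"
proof -
  have fin: "finite {u_mat m N A |A. True}"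
  proof (rule finite_subset[of _ "{..N}"])
    show "{u_mat m N A |A. True} \<subseteq> {..N}"
    proof
      fix x assume "x \<in> {u_mat m N A |A. True}"
      then obtain B where x: "x = u_mat m N B" by blast
      obtain S where S: "one_free m N B S" "card S = u_mat m N B" using u_mat_props[OF assms] by blast
      have "S \<subseteq> {..<N}" using S(1) unfolding one_free_def by blast
      hence "card S \<le> card {..<N}" by (intro card_mono) auto
      thus "x \<in> {..N}" using S(2) x by simp
    qed
  qed simp
  show ?thesis unfolding u_def by (rule Max_ge[OF fin]) blast
qed

lemma eps_ex:
  assumes "m < N" shows "\<exists>A. eps m N = eps_mat m N A"
proof -
  have fin: "finite {eps_mat m N A |A. True}"
  proof (rule finite_subset[of _ "{..N}"])
    show "{eps_mat m N A |A. True} \<subseteq> {..N}"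
    proof
      fix x assume "x \<in> {eps_mat m N A |A. True}"
      then obtain B where x: "x = eps_mat m N B" by blast
      obtain S where S: "even_set m N B S" "card S = eps_mat m N B" using eps_mat_props(1)[OF assms] by blast
      have "S \<subseteq> {..<N}" using S(1) unfolding even_set_def by blast
      hence "card S \<le> card {..<N}" by (intro card_mono) auto
      thus "x \<in> {..N}" using S(2) x by simp
    qed
  qed simp
  have "eps m N \<in> {eps_mat m N A |A. True}" unfolding eps_def by (rule Max_in[OF fin]) blast
  thus ?thesis by blast
qed

lemma u_lower:
  assumes k1: "k \<ge> 1" and n1: "n \<ge> 1"
  shows "2^k * ((n + k) div (2^k - 1)) \<le> 2 * u n (n + k)"
proof (cases "2^k - 1 \<le> n + k")
  case False
  hence "(n + k) div (2^k - 1) = 0" by simp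
  thus ?thesis by simp
next
  case True
  define N where "N = n + k"
  define R where "R = Rset N k"
  have cR: "card R \<le> n" using card_Rset[of k N] True unfolding R_def N_def by simp
  obtain h where h: "bij_betw h {0..<card R} R" using ex_bij_betw_nat_finite[OF finite_Rset] unfolding R_def by blast
  define f where "f i = (if i < card R then h i else {})" for i
  have fR: "\<forall>r\<in>Rset N k. \<exists>i<n. f i = r"
  proof
    fix r assume "r \<in> Rset N k"
    hence "r \<in> h ` {0..<card R}" using h unfolding bij_betw_def R_def by simp
    then obtain i where "i < card R" "h i = r" by auto
    thus "\<exists>i<n. f i = r" using cR unfolding f_def by (intro exI[of _ i]) simp
  qed
  have nN: "n < N" unfolding N_def using k1 by simp
  obtain S where S: "one_free n N (\<lambda>i j. j \<in> f i) S" "card S = u_mat n N (\<lambda>i j. j \<in> f i)"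
    using u_mat_props[OF nN] by blast
  have "2^k * (N div (2^k - 1)) \<le> 2 * card S"
    by (rule col_lemma[OF k1 _ fR S(1)]) (use True in \<open>simp add: N_def\<close>)
  also have "card S \<le> u n N" using S(2) u_ge[OF nN] by simp
  finally show ?thesis unfolding N_def by simp
qed

theorem corollary6p2:
  fixes k n :: nat
  assumes "k \<ge> 1" and "n \<ge> 1"
  shows "int (u n (n + k)) \<ge> int (eps n (n + k)) - 2 ^ (k - 1) - 1"
proof -
  define N where "N = n + k"
  define P :: nat where "P = 2^k"
  define M where "M = P - 1"
  have P2: "P = 2 * 2^(k-1)" unfolding P_def using assms(1)
    by (metis Suc_diff_1 less_le_trans power_Suc zero_less_one)
  have x1: "(1::nat) \<le> 2^(k-1)" by simp
  have M1: "1 \<le> M" unfolding M_def using P2 x1 by linarith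
  have nN: "n < N" unfolding N_def using assms by simp
  obtain A0 where A0: "eps n N = eps_mat n N A0" using eps_ex[OF nN] by blast
  have pl: "2 * eps n N * M \<le> N * P"
    using plotkin[of N n k A0] assms(1) A0 unfolding N_def M_def P_def by simp
  define q where "q = N div M"
  define r where "r = N mod M"
  have Nqr: "N = q * M + r" unfolding q_def r_def by simp
  have rM: "r < M" unfolding r_def using M1 by simp
  have U: "P * q \<le> 2 * u n N" using u_lower[OF assms] unfolding P_def q_def M_def N_def by simp
  have key: "eps n N < u n N + 2^(k-1)"
  proof (rule ccontr)
    assume "\<not> eps n N < u n N + 2^(k-1)"
    hence "2 * u n N + P \<le> 2 * eps n N" using P2 by simp
    hence "P * (q + 1) \<le> 2 * eps n N" using U by simp
    hence b: "P * (q + 1) * M \<le> 2 * eps n N * M" by (rule mult_le_mono1)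
    have "P * ((q + 1) * M) = P * (q + 1) * M" by (simp only: mult.assoc)
    also have "\<dots> \<le> 2 * eps n N * M" by (rule b)
    also have "\<dots> \<le> N * P" by (rule pl)
    also have "\<dots> = P * N" by (rule mult.commute)
    finally have a: "P * ((q + 1) * M) \<le> P * N" .
    have "N < (q + 1) * M" using Nqr rM by simp
    hence "P * N < P * ((q + 1) * M)" using P2 by simp
    with a show False by simp
  qed
  hence "eps n N \<le> u n N + 2^(k-1)" by simp
  hence "int (eps n N) \<le> int (u n N + 2^(k-1))" by (simp only: of_nat_le_iff)
  moreover have "int (u n N + 2^(k-1)) = int (u n N) + 2^(k-1)" by simp
  ultimately have "int (eps n N) \<le> int (u n N) + 2^(k-1)" by linarith
  thus ?thesis unfolding N_def by linarith
qed


end
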